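(* Let $n\ge2$, let $A=(a_{ij})$ be an $n\times n$ nonnegative irreducible matrix and $c=(c_1,\dots,c_n)^T$ a vector with all components positive. For $1\le i\le n$ put \[M_i=\frac{1}{c_i}\sum_{j=1}^n a_{ij}c_j,\qquad S=\min_{1\le i\le n}a_{ii},\qquad T=\min_{i\ne j}\frac{a_{ij}c_j}{c_i},\] and assume $M_1\ge M_2\ge\cdots\ge M_n$. Then \[\rho(A)\ge \frac{M_n+S-T+\sqrt{(M_n-S+T)^2+4T\sum_{k=1}^{n-1}(M_k-M_n)}}{2}.\] Equality holds if and only if $M_1=\cdots=M_n$, or $T>0$ and for some $2\le t\le n$: (i) $a_{kk}=S$ for $1\le k\le t-1$; (ii) $\frac{a_{kl}c_l}{c_k}=T$ for all $1\le k\le n$, $1\le l\le t-1$, $k\ne l$; (iii) $M_t=\cdots=M_n$.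
   Context: $\rho(A)$ denotes the spectral radius of $A$. *)

theory Defs
  imports "Jordan_Normal_Form.Spectral_Radius"
begin

definition nonneg_mat :: "real mat \<Rightarrow> bool" where
  "nonneg_mat A \<longleftrightarrow> (\<forall>i < dim_row A. \<forall>j < dim_col A. A $$ (i,j) \<ge> 0)"

text \<open>Directed graph of a square matrix: edge i -> j iff a_ij is nonzero.
  A (nonnegative) n x n matrix with n >= 2 is irreducible iff this graph is strongly connected.\<close>
definition mat_graph :: "real mat \<Rightarrow> (nat \<times> nat) set" where
  "mat_graph A = {(i,j). i < dim_row A \<and> j < dim_col A \<and> A $$ (i,j) \<noteq> 0}"

definition irreducible_mat :: "real mat \<Rightarrow> bool" where
  "irreducible_mat A \<longleftrightarrow>
     (\<forall>i < dim_row A. \<forall>j < dim_row A. i \<noteq> j \<longrightarrow> (i,j) \<in> (mat_graph A)\<^sup>+)"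

definition rho :: "real mat \<Rightarrow> real" where
  "rho A = spectral_radius (map_mat complex_of_real A)"

text \<open>Weighted row sums M_i = (1/c_i) sum_j a_ij c_j  (0-based indices).\<close>
definition Mrow :: "real mat \<Rightarrow> (nat \<Rightarrow> real) \<Rightarrow> nat \<Rightarrow> real" where
  "Mrow A c i = (\<Sum>j < dim_col A. A $$ (i,j) * c j) / c i"

definition Sdiag :: "real mat \<Rightarrow> real" where
  "Sdiag A = Min {A $$ (i,i) | i. i < dim_row A}"

definition Toff :: "real mat \<Rightarrow> (nat \<Rightarrow> real) \<Rightarrow> real" where
  "Toff A c = Min {A $$ (i,j) * c j / c i | i j. i < dim_row A \<and> j < dim_row A \<and> i \<noteq> j}"

end

theory Submission
  imports Defs
begin


lemma mult_entry:
  assumes "P \<in> carrier_mat n n" "B \<in> carrier_mat n n" "i < n" "j < n"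
  shows "(P * B) $$ (i,j) = (\<Sum>l<n. P$$(i,l) * B$$(l,j))"
  using assms by (simp add: scalar_prod_def atLeast0LessThan)

lemma pow_growth:
  fixes B :: "real mat"
  assumes B: "B \<in> carrier_mat n n" and nn: "\<forall>i<n. \<forall>j<n. B$$(i,j) \<ge> 0"
    and nu: "nu \<ge> 0"
    and ineq: "\<forall>i<n. nu * y i \<le> (\<Sum>j<n. B$$(i,j) * y j)"
  shows "(\<forall>i<n. \<forall>j<n. (B ^\<^sub>m k)$$(i,j) \<ge> 0) \<and> (\<forall>i<n. nu^k * y i \<le> (\<Sum>j<n. (B ^\<^sub>m k)$$(i,j) * y j))"
proof (induction k)
  case 0
  have "(\<Sum>j<n. (1\<^sub>m n :: real mat)$$(i,j) * y j) = y i" if "i<n" for i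
  proof -
    have "(\<Sum>j<n. (1\<^sub>m n :: real mat)$$(i,j) * y j) = (\<Sum>j<n. (if j = i then y j else 0))"
      by (rule sum.cong) (use that in auto)
    also have "\<dots> = y i" using that by simp
    finally show ?thesis .
  qed
  then show ?case using B by auto
next
  case (Suc k)
  let ?P = "B ^\<^sub>m k"
  have P: "?P \<in> carrier_mat n n" using B by simp
  have e: "(B ^\<^sub>m Suc k)$$(i,j) = (\<Sum>l<n. ?P$$(i,l) * B$$(l,j))" if "i<n" "j<n" for i j
    using mult_entry[OF P B that] by simp
  have nn2: "\<forall>i<n. \<forall>j<n. (B ^\<^sub>m Suc k)$$(i,j) \<ge> 0"
  proof (intro allI impI)
    fix i j assume ij: "i<n" "j<n"
    show "(B ^\<^sub>m Suc k)$$(i,j) \<ge> 0" unfolding e[OF ij]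
      using Suc.IH nn ij by (auto intro!: sum_nonneg)
  qed
  have "nu^(Suc k) * y i \<le> (\<Sum>j<n. (B ^\<^sub>m Suc k)$$(i,j) * y j)" if i: "i<n" for i
  proof -
    have "(\<Sum>j<n. (B ^\<^sub>m Suc k)$$(i,j) * y j) = (\<Sum>j<n. \<Sum>l<n. ?P$$(i,l) * B$$(l,j) * y j)"
    proof (rule sum.cong[OF refl])
      fix j assume "j \<in> {..<n}"
      hence j: "j < n" by simp
      show "(B ^\<^sub>m Suc k)$$(i,j) * y j = (\<Sum>l<n. ?P$$(i,l) * B$$(l,j) * y j)"
        unfolding e[OF i j] by (simp add: sum_distrib_right)
    qed
    also have "\<dots> = (\<Sum>l<n. ?P$$(i,l) * (\<Sum>j<n. B$$(l,j) * y j))"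
      by (subst sum.swap) (simp add: sum_distrib_left mult.assoc)
    also have "\<dots> \<ge> (\<Sum>l<n. ?P$$(i,l) * (nu * y l))"
      by (rule sum_mono) (use Suc.IH ineq i in \<open>auto intro: mult_left_mono\<close>)
    finally have a: "(\<Sum>l<n. ?P$$(i,l) * (nu * y l)) \<le> (\<Sum>j<n. (B ^\<^sub>m Suc k)$$(i,j) * y j)" .
    have "(\<Sum>l<n. ?P$$(i,l) * (nu * y l)) = nu * (\<Sum>l<n. ?P$$(i,l) * y l)"
      by (simp add: sum_distrib_left algebra_simps)
    moreover have "nu * (nu^k * y i) \<le> nu * (\<Sum>l<n. ?P$$(i,l) * y l)"
      using Suc.IH i nu by (auto intro: mult_left_mono)
    ultimately show ?thesis using a by simp
  qed
  then show ?case using nn2 by blast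
qed

lemma rho_nonneg:
  assumes A: "A \<in> carrier_mat n n" and n: "n > 0"
  shows "0 \<le> rho A"
proof -
  have "map_mat complex_of_real A \<in> carrier_mat n n" using A by auto
  from spectral_radius_mem_max(1)[OF this n] show ?thesis unfolding rho_def by auto
qed

lemma eig_scale:
  fixes B :: "complex mat"
  assumes B: "B \<in> carrier_mat n n" and k: "k \<noteq> 0" and ev: "eigenvalue (k \<cdot>\<^sub>m B) e"
  shows "eigenvalue B (e / k)"
proof -
  from ev obtain v where v: "v \<in> carrier_vec n" "v \<noteq> 0\<^sub>v n" "(k \<cdot>\<^sub>m B) *\<^sub>v v = e \<cdot>\<^sub>v v"
    unfolding eigenvalue_def eigenvector_def using B by auto
  have "B *\<^sub>v v = (e/k) \<cdot>\<^sub>v v"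
  proof (rule eq_vecI)
    fix i assume "i < dim_vec ((e/k) \<cdot>\<^sub>v v)"
    hence i: "i < n" using v by auto
    have c1: "((k \<cdot>\<^sub>m B) *\<^sub>v v) $ i = (\<Sum>j=0..<n. k * B$$(i,j) * v$j)" using i B v(1) by (simp add: scalar_prod_def)
    have c2: "(e \<cdot>\<^sub>v v) $ i = e * v $ i" using i v by simp
    have "(\<Sum>j=0..<n. k * B$$(i,j) * v$j) = e * v $ i" using v(3) c1 c2 by metis
    moreover have "(B *\<^sub>v v) $ i = (\<Sum>j=0..<n. B$$(i,j) * v$j)" using i B v(1) by (simp add: scalar_prod_def)
    ultimately have "k * (B *\<^sub>v v) $ i = e * v $ i" by (simp add: sum_distrib_left mult.assoc)
    thus "(B *\<^sub>v v) $ i = ((e/k) \<cdot>\<^sub>v v) $ i" using i v k by (simp add: field_simps)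
  qed (use B v in auto)
  then show ?thesis unfolding eigenvalue_def eigenvector_def using v B by auto
qed

lemma sr_scale:
  fixes B :: "complex mat"
  assumes B: "B \<in> carrier_mat n n" and n: "n > 0" and k: "k \<noteq> 0"
  shows "spectral_radius (k \<cdot>\<^sub>m B) \<le> norm k * spectral_radius B"
proof -
  have kB: "k \<cdot>\<^sub>m B \<in> carrier_mat n n" using B by simp
  from spectral_radius_mem_max(1)[OF kB n] obtain e where
    e: "e \<in> spectrum (k \<cdot>\<^sub>m B)" and sr: "spectral_radius (k \<cdot>\<^sub>m B) = norm e" by auto
  from eig_scale[OF B k] e have "e / k \<in> spectrum B" unfolding spectrum_def by auto
  from spectral_radius_mem_max(2)[OF B n] this have "norm (e/k) \<le> spectral_radius B" by auto
  hence "norm k * norm (e/k) \<le> norm k * spectral_radius B" by (simp add: mult_left_mono)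
  moreover have "norm k * norm (e/k) = norm e" using k by (simp add: norm_divide)
  ultimately show ?thesis using sr by simp
qed

lemma lower_bound:
  fixes A :: "real mat"
  assumes A: "A \<in> carrier_mat n n" and n: "n > 0" and nn: "\<forall>i<n. \<forall>j<n. A$$(i,j) \<ge> 0"
    and y: "\<forall>i<n. y i > 0" and ineq: "\<forall>i<n. lam * y i \<le> (\<Sum>j<n. A$$(i,j) * y j)"
  shows "lam \<le> rho A"
proof (rule ccontr)
  assume "\<not> lam \<le> rho A"
  hence lt: "rho A < lam" by simp
  have r0: "0 \<le> rho A" by (rule rho_nonneg[OF A n])
  define mu where "mu = (rho A + lam) / 2"
  have mu: "0 < mu" "rho A < mu" "mu < lam" using lt r0 unfolding mu_def by auto
  define A' where "A' = (1/mu) \<cdot>\<^sub>m A"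
  have A': "A' \<in> carrier_mat n n" using A unfolding A'_def by simp
  let ?Ac = "map_mat complex_of_real A"
  have Ac: "?Ac \<in> carrier_mat n n" using A by simp
  have C: "map_mat complex_of_real A' = complex_of_real (1/mu) \<cdot>\<^sub>m ?Ac"
    unfolding A'_def by (rule eq_matI) auto
  have "spectral_radius (map_mat complex_of_real A') \<le> norm (complex_of_real (1/mu)) * spectral_radius ?Ac"
    unfolding C by (rule sr_scale[OF Ac n]) (use mu in simp)
  also have "\<dots> = rho A / mu" using mu unfolding rho_def by (simp add: norm_divide)
  also have "\<dots> < 1" using mu by simp
  finally have "spectral_radius (map_mat complex_of_real A') < 1" .
  from spectral_radius_jnf_norm_bound_less_1_upper_triangular[OF _ this] A'
  obtain cb where cb: "\<And>k. norm_bound (map_mat complex_of_real A' ^\<^sub>m k) cb" by fastforce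
  have nnA': "\<forall>i<n. \<forall>j<n. A'$$(i,j) \<ge> 0" using nn A unfolding A'_def using mu by auto
  define lam' where "lam' = lam / mu"
  have lam': "lam' > 1" using mu unfolding lam'_def by simp
  have ineq': "\<forall>i<n. lam' * y i \<le> (\<Sum>j<n. A'$$(i,j) * y j)"
  proof (intro allI impI)
    fix i assume i: "i < n"
    have "(\<Sum>j<n. A'$$(i,j) * y j) = (\<Sum>j<n. A$$(i,j) * y j) / mu"
      unfolding A'_def using A i by (simp add: sum_divide_distrib)
    moreover have "lam' * y i = (lam * y i) / mu" unfolding lam'_def by simp
    ultimately show "lam' * y i \<le> (\<Sum>j<n. A'$$(i,j) * y j)"
      using ineq i mu by (simp add: divide_right_mono)
  qed
  have bnd: "\<bar>(A' ^\<^sub>m k)$$(i,j)\<bar> \<le> cb" if "i<n" "j<n" for i j k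
  proof -
    have "map_mat complex_of_real A' ^\<^sub>m k = map_mat complex_of_real (A' ^\<^sub>m k)"
      using of_real_hom.mat_hom_pow[OF A', of k] by (rule sym)
    with cb[of k] that A' show ?thesis unfolding norm_bound_def by auto
  qed
  define K where "K = (\<Sum>j<n. cb * y j)"
  have "lam' ^ k * y 0 \<le> K" for k
  proof -
    from pow_growth[OF A' nnA' _ ineq', of k] lam' n
    have "lam'^k * y 0 \<le> (\<Sum>j<n. (A' ^\<^sub>m k)$$(0,j) * y j)" by auto
    also have "\<dots> \<le> K" unfolding K_def
    proof (rule sum_mono)
      fix j assume "j \<in> {..<n}"
      hence j: "j < n" by simp
      have "(A' ^\<^sub>m k)$$(0,j) \<le> cb" using bnd[OF n j, of k] by simp
      thus "(A' ^\<^sub>m k)$$(0,j) * y j \<le> cb * y j" using y j by (simp add: mult_right_mono)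
    qed
    finally show ?thesis .
  qed
  moreover obtain k where "K / y 0 < lam' ^ k" using real_arch_pow[OF lam'] by blast
  ultimately show False using y n by (simp add: divide_less_eq) (metis not_less)
qed

lemma upper_bound:
  fixes A :: "real mat"
  assumes A: "A \<in> carrier_mat n n" and n: "n > 0" and nn: "\<forall>i<n. \<forall>j<n. A$$(i,j) \<ge> 0"
    and y: "\<forall>i<n. y i > 0" and ineq: "\<forall>i<n. (\<Sum>j<n. A$$(i,j) * y j) \<le> lam * y i"
  shows "rho A \<le> lam"
proof -
  let ?Ac = "map_mat complex_of_real A"
  have Ac: "?Ac \<in> carrier_mat n n" using A by simp
  from spectral_radius_mem_max(1)[OF Ac n] obtain e where
    e: "e \<in> spectrum ?Ac" and sr: "rho A = norm e" unfolding rho_def by auto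
  from e obtain v where v: "v \<in> carrier_vec n" "v \<noteq> 0\<^sub>v n" "?Ac *\<^sub>v v = e \<cdot>\<^sub>v v"
    unfolding spectrum_def eigenvalue_def eigenvector_def using Ac by auto
  define f where "f j = norm (v $ j) / y j" for j
  define r where "r = Max (f ` {..<n})"
  have fin: "finite (f ` {..<n})" by simp
  have ne: "f ` {..<n} \<noteq> {}" using n by auto
  from Max_in[OF fin ne] obtain i where i: "i < n" and ri: "r = f i" unfolding r_def by auto
  have fr: "f j \<le> r" if "j < n" for j unfolding r_def using fin that by auto
  have vj: "norm (v $ j) \<le> r * y j" if "j < n" for j
    using fr[OF that] y that unfolding f_def by (simp add: divide_le_eq)
  obtain j where j: "j < n" "v $ j \<noteq> 0"
    using v(1,2) by (metis eq_vecI carrier_vecD index_zero_vec(1,2))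
  have "0 < f j" unfolding f_def using j y by simp
  hence rpos: "0 < r" using fr[OF j(1)] by simp
  have vi: "norm (v $ i) = r * y i" using ri y[rule_format, OF i] unfolding f_def by (simp add: field_simps)
  have c1: "(?Ac *\<^sub>v v) $ i = (\<Sum>j=0..<n. complex_of_real (A$$(i,j)) * v$j)"
    using i A v(1) by (simp add: scalar_prod_def)
  have c2: "(e \<cdot>\<^sub>v v) $ i = e * v $ i" using i v(1) by simp
  have "norm e * norm (v $ i) = norm (\<Sum>j=0..<n. complex_of_real (A$$(i,j)) * v$j)"
    using v(3) c1 c2 by (metis norm_mult)
  also have "\<dots> \<le> (\<Sum>j=0..<n. norm (complex_of_real (A$$(i,j)) * v$j))" by (rule norm_sum)
  also have "\<dots> = (\<Sum>j<n. A$$(i,j) * norm (v$j))"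
    using nn i by (auto simp: norm_mult atLeast0LessThan intro!: sum.cong)
  also have "\<dots> \<le> (\<Sum>j<n. A$$(i,j) * (r * y j))"
    using nn i vj by (auto intro!: sum_mono mult_left_mono)
  also have "\<dots> = r * (\<Sum>j<n. A$$(i,j) * y j)" by (simp add: sum_distrib_left algebra_simps)
  also have "\<dots> \<le> r * (lam * y i)" using ineq i rpos by (simp add: mult_left_mono)
  also have "\<dots> = lam * norm (v $ i)" using vi by simp
  finally have "norm e * norm (v $ i) \<le> lam * norm (v $ i)" .
  moreover have "norm (v $ i) > 0" using vi rpos y i by simp
  ultimately show ?thesis using sr by simp
qed

lemma crossing_edge:
  assumes A: "A \<in> carrier_mat n n" and irr: "irreducible_mat A"
    and i0: "i0 < n" "i0 \<notin> P" and j0: "j0 < n" "j0 \<in> P"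
  shows "\<exists>u v. u < n \<and> v < n \<and> u \<notin> P \<and> v \<in> P \<and> A$$(u,v) \<noteq> 0"
proof -
  have "i0 \<noteq> j0" using i0 j0 by auto
  hence tr: "(i0, j0) \<in> (mat_graph A)\<^sup>+" using irr A i0 j0 unfolding irreducible_mat_def by auto
  have "\<And>b. (i0, b) \<in> (mat_graph A)\<^sup>+ \<Longrightarrow> b \<in> P \<Longrightarrow> \<exists>u v. u < n \<and> v < n \<and> u \<notin> P \<and> v \<in> P \<and> A$$(u,v) \<noteq> 0"
  proof -
    fix b assume "(i0, b) \<in> (mat_graph A)\<^sup>+" "b \<in> P"
    thus "\<exists>u v. u < n \<and> v < n \<and> u \<notin> P \<and> v \<in> P \<and> A$$(u,v) \<noteq> 0"
    proof (induction rule: trancl_induct)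
      case (base y)
      then show ?case using i0 A unfolding mat_graph_def by auto
    next
      case (step y z)
      show ?case
      proof (cases "y \<in> P")
        case True then show ?thesis using step.IH by blast
      next
        case False then show ?thesis using step.hyps(2) step.prems A unfolding mat_graph_def by auto
      qed
    qed
  qed
  from this[OF tr j0(2)] show ?thesis .
qed

lemma perturb_all_strict:
  fixes A :: "real mat"
  assumes A: "A \<in> carrier_mat n n" and nn: "\<forall>i<n. \<forall>j<n. A$$(i,j) \<ge> 0"
    and irr: "irreducible_mat A"
  shows "\<And>y. (\<forall>i<n. y i > 0) \<Longrightarrow> (\<forall>i<n. lam * y i \<le> (\<Sum>j<n. A$$(i,j) * y j))
    \<Longrightarrow> (\<exists>i<n. lam * y i < (\<Sum>j<n. A$$(i,j) * y j))
    \<Longrightarrow> n \<le> card {i. i < n \<and> lam * y i < (\<Sum>j<n. A$$(i,j) * y j)} + m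
    \<Longrightarrow> \<exists>z. (\<forall>i<n. z i > 0) \<and> (\<forall>i<n. lam * z i < (\<Sum>j<n. A$$(i,j) * z j))"
proof (induction m)
  case 0
  let ?P = "{i. i < n \<and> lam * y i < (\<Sum>j<n. A$$(i,j) * y j)}"
  have "?P \<subseteq> {..<n}" by auto
  moreover have "card {..<n} \<le> card ?P" using 0 by simp
  ultimately have eq: "?P = {..<n}" by (rule card_seteq[OF finite_lessThan])
  have "\<forall>i<n. lam * y i < (\<Sum>j<n. A$$(i,j) * y j)"
  proof (intro allI impI)
    fix i assume "i < n"
    hence "i \<in> ?P" using eq by blast
    thus "lam * y i < (\<Sum>j<n. A$$(i,j) * y j)" by simp
  qed
  with 0(1) show ?case by blast
next
  case (Suc m)
  let ?P = "{i. i < n \<and> lam * y i < (\<Sum>j<n. A$$(i,j) * y j)}"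
  show ?case
  proof (cases "\<forall>i<n. lam * y i < (\<Sum>j<n. A$$(i,j) * y j)")
    case True then show ?thesis using Suc.prems by blast
  next
    case False
    then obtain i0 where i0: "i0 < n" "i0 \<notin> ?P" by auto
    from Suc.prems(3) obtain j0 where j0: "j0 < n" "j0 \<in> ?P" by auto
    from crossing_edge[OF A irr i0 j0] obtain u v where
      uv: "u < n" "v < n" "u \<notin> ?P" "v \<in> ?P" "A$$(u,v) \<noteq> 0" by blast
    have "A$$(u,v) \<ge> 0" using nn uv(1,2) by blast
    hence auv: "A$$(u,v) > 0" using uv(5) by linarith
    define g where "g = (\<Sum>j<n. A$$(v,j) * y j) - lam * y v"
    have g: "g > 0" using uv unfolding g_def by auto
    define d where "d = g / (\<bar>lam\<bar> + \<bar>A$$(v,v)\<bar> + 1)"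
    have d: "d > 0" using g unfolding d_def by (simp add: add_pos_nonneg)
    have dg: "d * (lam - A$$(v,v)) < g"
    proof -
      have "d * (lam - A$$(v,v)) \<le> d * (\<bar>lam\<bar> + \<bar>A$$(v,v)\<bar>)" using d by (intro mult_left_mono) auto
      also have "\<dots> < d * (\<bar>lam\<bar> + \<bar>A$$(v,v)\<bar> + 1)" using d by simp
      also have "\<dots> = g" unfolding d_def by simp
      finally show ?thesis .
    qed
    define y' where "y' j = y j + (if j = v then d else 0)" for j
    have sy': "(\<Sum>j<n. A$$(k,j) * y' j) = (\<Sum>j<n. A$$(k,j) * y j) + A$$(k,v) * d" for k
    proof -
      have "(\<Sum>j<n. A$$(k,j) * y' j) = (\<Sum>j<n. A$$(k,j) * y j + (if j = v then A$$(k,j) * d else 0))"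
        unfolding y'_def by (rule sum.cong) (auto simp: distrib_left)
      also have "\<dots> = (\<Sum>j<n. A$$(k,j) * y j) + (\<Sum>j<n. (if j = v then A$$(k,j) * d else 0))"
        by (rule sum.distrib)
      also have "(\<Sum>j<n. (if j = v then A$$(k,j) * d else 0)) = A$$(k,v) * d" using uv by simp
      finally show ?thesis .
    qed
    let ?P' = "{i. i < n \<and> lam * y' i < (\<Sum>j<n. A$$(i,j) * y' j)}"
    have pos': "\<forall>i<n. y' i > 0" using Suc.prems(1) d unfolding y'_def by auto
    have weak: "lam * y' i \<le> (\<Sum>j<n. A$$(i,j) * y' j)" and
         strict: "i \<in> ?P \<or> i = u \<Longrightarrow> lam * y' i < (\<Sum>j<n. A$$(i,j) * y' j)" if i: "i < n" for i
    proof -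
      have nnd: "A$$(i,v) * d \<ge> 0" using nn i uv d by simp
      have w: "lam * y i \<le> (\<Sum>j<n. A$$(i,j) * y j)" using Suc.prems(2) i by auto
      show "lam * y' i \<le> (\<Sum>j<n. A$$(i,j) * y' j)"
      proof (cases "i = v")
        case True
        have "lam * y' i = lam * y v + lam * d" using True unfolding y'_def by (simp add: algebra_simps)
        moreover have "(\<Sum>j<n. A$$(i,j) * y' j) = lam * y v + g + A$$(v,v) * d"
          using True sy'[of i] unfolding g_def by simp
        ultimately show ?thesis using dg by (simp add: algebra_simps)
      next
        case False
        then show ?thesis using sy'[of i] w nnd unfolding y'_def by simp
      qed
      assume "i \<in> ?P \<or> i = u"
      then show "lam * y' i < (\<Sum>j<n. A$$(i,j) * y' j)"
      proof
        assume iP: "i \<in> ?P"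
        show ?thesis
        proof (cases "i = v")
          case True
          have "lam * y' i = lam * y v + lam * d" using True unfolding y'_def by (simp add: algebra_simps)
          moreover have "(\<Sum>j<n. A$$(i,j) * y' j) = lam * y v + g + A$$(v,v) * d"
            using True sy'[of i] unfolding g_def by simp
          ultimately show ?thesis using dg by (simp add: algebra_simps)
        next
          case False
          then show ?thesis using sy'[of i] iP nnd unfolding y'_def by simp
        qed
      next
        assume iu: "i = u"
        have "u \<noteq> v" using uv by auto
        have pp: "A$$(u,v) * d > 0" using auv d by simp
        have "y' u = y u" using \<open>u \<noteq> v\<close> unfolding y'_def by simp
        then show ?thesis using sy'[of u] w iu pp by simp
      qed
    qed
    have sub: "insert u ?P \<subseteq> ?P'" using strict uv by auto
    have "card (insert u ?P) = Suc (card ?P)" using uv(3) by simp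
    moreover have "card (insert u ?P) \<le> card ?P'" by (rule card_mono[OF _ sub]) simp
    ultimately have "n \<le> card ?P' + m" using Suc.prems(4) by simp
    moreover have "\<exists>i<n. lam * y' i < (\<Sum>j<n. A$$(i,j) * y' j)" using strict uv by blast
    ultimately show ?thesis using Suc.IH[OF pos'] weak by blast
  qed
qed

lemma strict_lower:
  fixes A :: "real mat"
  assumes A: "A \<in> carrier_mat n n" and n: "n > 0" and nn: "\<forall>i<n. \<forall>j<n. A$$(i,j) \<ge> 0"
    and irr: "irreducible_mat A"
    and y: "\<forall>i<n. y i > 0" and ineq: "\<forall>i<n. lam * y i \<le> (\<Sum>j<n. A$$(i,j) * y j)"
    and str: "\<exists>i<n. lam * y i < (\<Sum>j<n. A$$(i,j) * y j)"
  shows "lam < rho A"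
proof -
  from perturb_all_strict[OF A nn irr y ineq str, of n] obtain z where
    z: "\<forall>i<n. z i > 0" "\<forall>i<n. lam * z i < (\<Sum>j<n. A$$(i,j) * z j)" by auto
  define f where "f i = ((\<Sum>j<n. A$$(i,j) * z j) - lam * z i) / z i" for i
  define e where "e = Min (f ` {..<n})"
  have fin: "finite (f ` {..<n})" by simp
  have ne: "f ` {..<n} \<noteq> {}" using n by auto
  from Min_in[OF fin ne] obtain i where i: "i < n" and ei: "e = f i" unfolding e_def by auto
  have epos: "e > 0" using ei z i unfolding f_def by auto
  have "(lam + e) * z k \<le> (\<Sum>j<n. A$$(k,j) * z j)" if k: "k < n" for k
  proof -
    have "e \<le> f k" unfolding e_def using fin k by auto
    hence "e * z k \<le> (\<Sum>j<n. A$$(k,j) * z j) - lam * z k"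
      using z k unfolding f_def by (simp add: le_divide_eq)
    thus ?thesis by (simp add: algebra_simps)
  qed
  from lower_bound[OF A n nn z(1)] this have "lam + e \<le> rho A" by blast
  thus ?thesis using epos by simp
qed



theorem theorem2:
  fixes A :: "real mat" and c :: "nat \<Rightarrow> real" and n :: nat
  assumes "n \<ge> 2"
    and "A \<in> carrier_mat n n"
    and "nonneg_mat A"
    and "irreducible_mat A"
    and "\<forall>i < n. c i > 0"
    and "\<forall>i j. i \<le> j \<and> j < n \<longrightarrow> Mrow A c j \<le> Mrow A c i"
  shows "(rho A \<ge> (Mrow A c (n-1) + Sdiag A - Toff A c
            + sqrt ((Mrow A c (n-1) - Sdiag A + Toff A c)\<^sup>2
                    + 4 * Toff A c * (\<Sum>k < n-1. Mrow A c k - Mrow A c (n-1)))) / 2)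
     \<and> (rho A = (Mrow A c (n-1) + Sdiag A - Toff A c
            + sqrt ((Mrow A c (n-1) - Sdiag A + Toff A c)\<^sup>2
                    + 4 * Toff A c * (\<Sum>k < n-1. Mrow A c k - Mrow A c (n-1)))) / 2
         \<longleftrightarrow> ((\<forall>i < n. Mrow A c i = Mrow A c 0)
              \<or> (Toff A c > 0 \<and>
                 (\<exists>t. 2 \<le> t \<and> t \<le> n
                    \<and> (\<forall>k < t-1. A $$ (k,k) = Sdiag A)
                    \<and> (\<forall>k < n. \<forall>l < t-1. k \<noteq> l \<longrightarrow> A $$ (k,l) * c l / c k = Toff A c)
                    \<and> (\<forall>k. t-1 \<le> k \<and> k < n \<longrightarrow> Mrow A c k = Mrow A c (n-1))))))"
proof -
  note n2 = assms(1) and A = assms(2) and irr = assms(4) and cpos = assms(5) and mono = assms(6)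
  have n0: "n > 0" using n2 by simp
  have nn: "\<forall>i<n. \<forall>j<n. A$$(i,j) \<ge> 0" using assms(3) A unfolding nonneg_mat_def by auto
  define M where "M = Mrow A c"
  define S where "S = Sdiag A"
  define T where "T = Toff A c"
  define m where "m = n - 1"
  have m: "m < n" "0 < m" "Suc m = n" using n2 unfolding m_def by auto
  define b where "b i j = A$$(i,j) * c j / c i" for i j
  have Mb: "M i = (\<Sum>j<n. b i j)" if "i < n" for i
    unfolding M_def Mrow_def b_def using A by (simp add: sum_divide_distrib)
  have bnn: "b i j \<ge> 0" if "i<n" "j<n" for i j
  proof -
    have "A$$(i,j) \<ge> 0" "c j > 0" "c i > 0" using nn cpos that by auto
    thus ?thesis unfolding b_def by simp
  qed
  have bii: "b i i = A$$(i,i)" if "i<n" for i using cpos[rule_format, OF that] unfolding b_def by simp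
  have Sle: "S \<le> b i i" if "i<n" for i
  proof -
    have "{A $$ (i,i) | i. i < dim_row A} = (\<lambda>i. A$$(i,i)) ` {..<n}" using A by auto
    hence "S = Min ((\<lambda>i. A$$(i,i)) ` {..<n})" unfolding S_def Sdiag_def by simp
    thus ?thesis using that bii[OF that] by simp
  qed
  define TS where "TS = (\<lambda>(i,j). b i j) ` {(i,j). i < n \<and> j < n \<and> i \<noteq> j}"
  have TSeq: "T = Min TS"
  proof -
    have "{A $$ (i,j) * c j / c i | i j. i < dim_row A \<and> j < dim_row A \<and> i \<noteq> j} = TS"
      unfolding TS_def b_def using A by auto
    thus ?thesis unfolding T_def Toff_def by simp
  qed
  have finTS: "finite TS" unfolding TS_def
    by (rule finite_imageI, rule finite_subset[of _ "{..<n} \<times> {..<n}"]) auto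
  have neTS: "TS \<noteq> {}" unfolding TS_def using m by auto
  have Tle: "T \<le> b i j" if "i<n" "j<n" "i \<noteq> j" for i j
    unfolding TSeq using finTS that unfolding TS_def by (auto intro!: Min_le)
  have T0: "T \<ge> 0"
  proof -
    have "T \<in> TS" unfolding TSeq using Min_in[OF finTS neTS] .
    thus ?thesis unfolding TS_def using bnn by auto
  qed
  define d where "d k = M k - M m" for k
  have d0: "d k \<ge> 0" if "k < n" for k using mono that m unfolding d_def M_def by auto
  have dmono: "d k \<le> d j" if "j \<le> k" "k < n" for j k using mono that unfolding d_def M_def by auto
  have dm: "d m = 0" unfolding d_def by simp
  define D where "D = (\<Sum>k<m. d k)"
  have Dn: "(\<Sum>k<n. d k) = D" unfolding D_def using m(3) dm by (metis add.right_neutral sum.lessThan_Suc)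
  have D0: "D \<ge> 0" unfolding D_def using d0 m by (auto intro!: sum_nonneg)
  have MmST: "M m \<ge> S + T"
  proof -
    have "{m, 0} \<subseteq> {..<n}" using m by auto
    hence "(\<Sum>j\<in>{m,0}. b m j) \<le> (\<Sum>j<n. b m j)" using bnn m by (intro sum_mono2) auto
    moreover have "(\<Sum>j\<in>{m,0}. b m j) = b m m + b m 0" using m by simp
    moreover have "S \<le> b m m" using Sle m by simp
    moreover have "T \<le> b m 0" using Tle m by simp
    ultimately show ?thesis using Mb[OF m(1)] by simp
  qed
  define p where "p = M m - S + T"
  have p0: "p \<ge> 0" unfolding p_def using MmST T0 by simp
  define q where "q = p^2 + 4 * T * D"
  have sq: "sqrt q \<ge> p" unfolding q_def using T0 D0 p0 by (simp add: real_le_rsqrt)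
  define lam where "lam = (M m + S - T + sqrt q) / 2"
  have goal_eq: "(Mrow A c (n-1) + Sdiag A - Toff A c
            + sqrt ((Mrow A c (n-1) - Sdiag A + Toff A c)\<^sup>2
                    + 4 * Toff A c * (\<Sum>k < n-1. Mrow A c k - Mrow A c (n-1)))) / 2 = lam"
    unfolding lam_def q_def p_def D_def d_def M_def S_def T_def m_def by simp
  define alpha where "alpha = lam - S + T"
  have alpha: "alpha = (p + sqrt q) / 2" unfolding alpha_def lam_def p_def by (simp add: field_simps)
  have key: "alpha * (M m - lam) + T * D = 0"
  proof -
    have qn: "q \<ge> 0" unfolding q_def using T0 D0 by simp
    have h1: "sqrt q * sqrt q = p * p + 4 * T * D" using qn unfolding q_def[symmetric]
      by (simp add: q_def power2_eq_square)
    have h2: "M m - lam = (p - sqrt q)/2" unfolding lam_def p_def by (simp add: field_simps)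
    have "alpha * (M m - lam) = (p + sqrt q) * (p - sqrt q) / 4" unfolding alpha h2 by simp
    also have "\<dots> = (p * p - sqrt q * sqrt q) / 4" by (simp add: algebra_simps)
    also have "\<dots> = - (T * D)" unfolding h1 by simp
    finally show ?thesis by simp
  qed
  define e where "e i j = (if j = i then S else T)" for i j :: nat
  define slack where "slack i = (\<Sum>j<n. (b i j - e i j) * d j)" for i
  have slack_terms: "(b i j - e i j) * d j \<ge> 0" if "i<n" "j<n" for i j
    using Sle Tle d0 that unfolding e_def by (cases "j = i") auto
  have slack0: "slack i \<ge> 0" if "i<n" for i
    unfolding slack_def using slack_terms that by (auto intro!: sum_nonneg)
  define y where "y j = c j * (alpha + d j)" for j
  have ident: "(\<Sum>j<n. A$$(i,j) * y j) - lam * y i = c i * slack i" if i: "i < n" for i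
  proof -
    have ci: "c i > 0" using cpos i by simp
    have s1: "(\<Sum>j<n. A$$(i,j) * y j) = c i * (\<Sum>j<n. b i j * (alpha + d j))"
      unfolding sum_distrib_left y_def b_def using ci by (intro sum.cong) auto
    have s2: "(\<Sum>j<n. b i j * (alpha + d j)) = alpha * M i + (\<Sum>j<n. b i j * d j)"
      unfolding Mb[OF i] by (simp add: algebra_simps sum.distrib sum_distrib_left)
    have s3: "(\<Sum>j<n. e i j * d j) = T * D + (S - T) * d i"
    proof -
      have "(\<Sum>j<n. e i j * d j) = (\<Sum>j<n. T * d j + (if j = i then (S - T) * d j else 0))"
        unfolding e_def by (intro sum.cong) (auto simp: algebra_simps)
      also have "\<dots> = T * D + (S - T) * d i"
        using i by (simp add: sum.distrib sum_distrib_left[symmetric] Dn)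
      finally show ?thesis .
    qed
    have s4: "slack i = (\<Sum>j<n. b i j * d j) - (\<Sum>j<n. e i j * d j)"
      unfolding slack_def by (simp add: algebra_simps sum_subtractf)
    have Mi: "M i = M m + d i" unfolding d_def by simp
    have "(\<Sum>j<n. b i j * (alpha + d j)) - lam * (alpha + d i) = slack i"
      unfolding s2 s4 s3 Mi using key unfolding alpha_def by (simp add: algebra_simps)
    note h = this
    have yi: "y i = c i * (alpha + d i)" unfolding y_def ..
    have "(\<Sum>j<n. A$$(i,j) * y j) - lam * y i
        = c i * ((\<Sum>j<n. b i j * (alpha + d j)) - lam * (alpha + d i))"
      unfolding s1 yi by (simp add: algebra_simps)
    thus ?thesis unfolding h .
  qed
  have rowc: "(\<Sum>j<n. A$$(i,j) * c j) = M i * c i" if "i < n" for i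
  proof -
    have ci: "c i \<noteq> 0" using cpos that by auto
    have dc: "dim_col A = n" using A by simp
    show ?thesis unfolding M_def Mrow_def dc using ci by simp
  qed
  have allEq: "(\<forall>i<n. M i = M 0) \<longleftrightarrow> (\<forall>k<n. d k = 0)"
  proof
    assume h: "\<forall>i<n. M i = M 0"
    show "\<forall>k<n. d k = 0"
    proof (intro allI impI)
      fix k assume k: "k < n"
      have "M k = M 0" using h k by blast
      moreover have "M m = M 0" using h m(1) by blast
      ultimately show "d k = 0" unfolding d_def by simp
    qed
  next
    assume h: "\<forall>k<n. d k = 0"
    show "\<forall>i<n. M i = M 0"
    proof (intro allI impI)
      fix i assume "i < n"
      hence "d i = 0" "d 0 = 0" using h n0 by auto
      thus "M i = M 0" unfolding d_def by simp
    qed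
  qed
  have notEq: "d 0 > 0" if "\<not> (\<forall>k<n. d k = 0)"
  proof -
    from that obtain k where k: "k < n" "d k \<noteq> 0" by auto
    have "d k > 0" using d0[OF k(1)] k(2) by simp
    moreover have "d k \<le> d 0" using dmono[of 0 k] k by simp
    ultimately show ?thesis by simp
  qed
  have ci: "c i > 0" if "i < n" for i using cpos that by simp
  have main: "lam \<le> rho A \<and> (rho A = lam \<longleftrightarrow> ((\<forall>i<n. M i = M 0)
              \<or> (T > 0 \<and>
                 (\<exists>t. 2 \<le> t \<and> t \<le> n
                    \<and> (\<forall>k < t-1. A $$ (k,k) = S)
                    \<and> (\<forall>k < n. \<forall>l < t-1. k \<noteq> l \<longrightarrow> A $$ (k,l) * c l / c k = T)
                    \<and> (\<forall>k. t-1 \<le> k \<and> k < n \<longrightarrow> M k = M m)))))"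
  proof (cases "T = 0")
    case True
    have "q = p^2" unfolding q_def True by simp
    hence "sqrt q = p" using p0 by simp
    hence lamM: "lam = M m" unfolding lam_def p_def True by simp
    have lowc: "\<forall>i<n. lam * c i \<le> (\<Sum>j<n. A$$(i,j) * c j)"
    proof (intro allI impI)
      fix i assume i: "i < n"
      have "M m \<le> M i" using d0[OF i] unfolding d_def by simp
      thus "lam * c i \<le> (\<Sum>j<n. A$$(i,j) * c j)" unfolding rowc[OF i] lamM
        using ci[OF i] by (simp add: mult_right_mono)
    qed
    have low: "lam \<le> rho A" using lower_bound[OF A n0 nn cpos lowc] .
    have iff: "rho A = lam \<longleftrightarrow> (\<forall>i<n. M i = M 0)"
    proof
      assume eq: "rho A = lam"
      show "\<forall>i<n. M i = M 0"
      proof (rule ccontr)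
        assume "\<not> (\<forall>i<n. M i = M 0)"
        hence "d 0 > 0" using notEq allEq by blast
        hence "lam * c 0 < (\<Sum>j<n. A$$(0,j) * c j)" unfolding rowc[OF n0] lamM d_def
          using ci[OF n0] by simp
        hence "\<exists>i<n. lam * c i < (\<Sum>j<n. A$$(i,j) * c j)" using n0 by blast
        from strict_lower[OF A n0 nn irr cpos lowc this] eq show False by simp
      qed
    next
      assume h: "\<forall>i<n. M i = M 0"
      have "\<forall>i<n. (\<Sum>j<n. A$$(i,j) * c j) \<le> lam * c i"
      proof (intro allI impI)
        fix i assume i: "i < n"
        have "M i = M 0" "M m = M 0" using h i m(1) by blast+
        hence "M i = M m" by simp
        thus "(\<Sum>j<n. A$$(i,j) * c j) \<le> lam * c i" unfolding rowc[OF i] lamM by simp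
      qed
      from upper_bound[OF A n0 nn cpos this] low show "rho A = lam" by simp
    qed
    show ?thesis using low iff True by simp
  next
    case False
    hence Tpos: "T > 0" using T0 by simp
    have "p > 0" unfolding p_def using MmST Tpos by simp
    hence apos: "alpha > 0" unfolding alpha using sq by simp
    have ypos: "\<forall>i<n. y i > 0"
    proof (intro allI impI)
      fix i assume i: "i < n"
      have "alpha + d i > 0" using apos d0[OF i] by linarith
      thus "y i > 0" unfolding y_def using ci[OF i] by simp
    qed
    have lowy: "\<forall>i<n. lam * y i \<le> (\<Sum>j<n. A$$(i,j) * y j)"
    proof (intro allI impI)
      fix i assume i: "i < n"
      have "c i * slack i \<ge> 0" using ci[OF i] slack0[OF i] by simp
      thus "lam * y i \<le> (\<Sum>j<n. A$$(i,j) * y j)" using ident[OF i] by simp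
    qed
    have low: "lam \<le> rho A" using lower_bound[OF A n0 nn ypos lowy] .
    have E1: "rho A = lam \<longleftrightarrow> (\<forall>i<n. slack i = 0)"
    proof
      assume eq: "rho A = lam"
      show "\<forall>i<n. slack i = 0"
      proof (rule ccontr)
        assume "\<not> (\<forall>i<n. slack i = 0)"
        then obtain i where i: "i < n" "slack i \<noteq> 0" by auto
        hence "slack i > 0" using slack0[OF i(1)] by simp
        hence "c i * slack i > 0" using ci[OF i(1)] by simp
        hence "lam * y i < (\<Sum>j<n. A$$(i,j) * y j)" using ident[OF i(1)] by simp
        hence "\<exists>i<n. lam * y i < (\<Sum>j<n. A$$(i,j) * y j)" using i by blast
        from strict_lower[OF A n0 nn irr ypos lowy this] eq show False by simp
      qed
    next
      assume h: "\<forall>i<n. slack i = 0"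
      have "\<forall>i<n. (\<Sum>j<n. A$$(i,j) * y j) \<le> lam * y i" using ident h by simp
      from upper_bound[OF A n0 nn ypos this] low show "rho A = lam" by simp
    qed
    have terms: "slack i = 0 \<longleftrightarrow> (\<forall>j<n. (b i j - e i j) * d j = 0)" if i: "i < n" for i
      unfolding slack_def using slack_terms[OF i] by (subst sum_nonneg_eq_0_iff) auto
    have E3: "(\<forall>i<n. slack i = 0) \<longleftrightarrow> ((\<forall>i<n. M i = M 0)
              \<or> (T > 0 \<and>
                 (\<exists>t. 2 \<le> t \<and> t \<le> n
                    \<and> (\<forall>k < t-1. A $$ (k,k) = S)
                    \<and> (\<forall>k < n. \<forall>l < t-1. k \<noteq> l \<longrightarrow> A $$ (k,l) * c l / c k = T)
                    \<and> (\<forall>k. t-1 \<le> k \<and> k < n \<longrightarrow> M k = M m))))"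
    proof
      assume h: "\<forall>i<n. slack i = 0"
      have tz: "(b i j - e i j) * d j = 0" if "i<n" "j<n" for i j using h terms that by blast
      show "(\<forall>i<n. M i = M 0) \<or> (T > 0 \<and>
                 (\<exists>t. 2 \<le> t \<and> t \<le> n
                    \<and> (\<forall>k < t-1. A $$ (k,k) = S)
                    \<and> (\<forall>k < n. \<forall>l < t-1. k \<noteq> l \<longrightarrow> A $$ (k,l) * c l / c k = T)
                    \<and> (\<forall>k. t-1 \<le> k \<and> k < n \<longrightarrow> M k = M m)))"
      proof (cases "\<forall>k<n. d k = 0")
        case True then show ?thesis using allEq by blast
      next
        case False
        have dd0: "d 0 > 0" using notEq[OF False] .
        define t1 where "t1 = (LEAST k. d k = 0)"
        have t1m: "t1 \<le> m" unfolding t1_def using dm by (rule Least_le)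
        have dt1: "d t1 = 0" unfolding t1_def using dm by (rule LeastI)
        have t1pos: "t1 > 0" using dt1 dd0 by (cases t1) auto
        have below: "d k \<noteq> 0" if "k < t1" for k using not_less_Least[of k "\<lambda>k. d k = 0"] that
          unfolding t1_def by blast
        show ?thesis
        proof (rule disjI2, intro conjI Tpos exI[of _ "Suc t1"])
          show "2 \<le> Suc t1" using t1pos by simp
          show "Suc t1 \<le> n" using t1m m by simp
          show "\<forall>k<Suc t1 - 1. A $$ (k, k) = S"
          proof (intro allI impI)
            fix k assume "k < Suc t1 - 1"
            hence k: "k < t1" "k < n" using t1m m by auto
            have "(b k k - e k k) * d k = 0" using tz k by simp
            hence "b k k = S" using below[OF k(1)] unfolding e_def by simp
            thus "A $$ (k, k) = S" using bii[OF k(2)] by simp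
          qed
          show "\<forall>k<n. \<forall>l<Suc t1 - 1. k \<noteq> l \<longrightarrow> A $$ (k, l) * c l / c k = T"
          proof (intro allI impI)
            fix k l assume k: "k < n" and l: "l < Suc t1 - 1" and kl: "k \<noteq> l"
            hence l': "l < t1" "l < n" using t1m m by auto
            have "(b k l - e k l) * d l = 0" using tz k l' by simp
            hence "b k l = T" using below[OF l'(1)] kl unfolding e_def by simp
            thus "A $$ (k, l) * c l / c k = T" unfolding b_def .
          qed
          show "\<forall>k. Suc t1 - 1 \<le> k \<and> k < n \<longrightarrow> M k = M m"
          proof (intro allI impI)
            fix k assume "Suc t1 - 1 \<le> k \<and> k < n"
            hence k: "t1 \<le> k" "k < n" by auto
            have "d k \<le> d t1" using dmono k by simp
            hence "d k = 0" using d0[OF k(2)] dt1 by simp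
            thus "M k = M m" unfolding d_def by simp
          qed
        qed
      qed
    next
      assume h: "(\<forall>i<n. M i = M 0) \<or> (T > 0 \<and>
                 (\<exists>t. 2 \<le> t \<and> t \<le> n
                    \<and> (\<forall>k < t-1. A $$ (k,k) = S)
                    \<and> (\<forall>k < n. \<forall>l < t-1. k \<noteq> l \<longrightarrow> A $$ (k,l) * c l / c k = T)
                    \<and> (\<forall>k. t-1 \<le> k \<and> k < n \<longrightarrow> M k = M m)))"
      show "\<forall>i<n. slack i = 0"
      proof (intro allI impI)
        fix i assume i: "i < n"
        have "\<forall>j<n. (b i j - e i j) * d j = 0"
        proof (intro allI impI)
          fix j assume j: "j < n"
          from h show "(b i j - e i j) * d j = 0"
          proof
            assume "\<forall>i<n. M i = M 0"
            hence "d j = 0" using allEq j by blast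
            thus ?thesis by simp
          next
            assume "T > 0 \<and> (\<exists>t. 2 \<le> t \<and> t \<le> n
                    \<and> (\<forall>k < t-1. A $$ (k,k) = S)
                    \<and> (\<forall>k < n. \<forall>l < t-1. k \<noteq> l \<longrightarrow> A $$ (k,l) * c l / c k = T)
                    \<and> (\<forall>k. t-1 \<le> k \<and> k < n \<longrightarrow> M k = M m))"
            then obtain t where t1: "\<forall>k < t-1. A $$ (k,k) = S"
              and t2: "\<forall>k < n. \<forall>l < t-1. k \<noteq> l \<longrightarrow> A $$ (k,l) * c l / c k = T"
              and t3: "\<forall>k. t-1 \<le> k \<and> k < n \<longrightarrow> M k = M m" by blast
            show ?thesis
            proof (cases "j < t - 1")
              case True
              have "b i j = e i j"
              proof (cases "j = i")
                case True2: True
                then show ?thesis using t1 True bii[OF i] unfolding e_def by simp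
              next
                case False
                then show ?thesis using t2 True i unfolding e_def b_def by simp
              qed
              thus ?thesis by simp
            next
              case False
              hence "M j = M m" using t3 j by simp
              hence "d j = 0" unfolding d_def by simp
              thus ?thesis by simp
            qed
          qed
        qed
        thus "slack i = 0" using terms[OF i] by blast
      qed
    qed
    show ?thesis using low E1 E3 by blast
  qed
  have lam_eq2: "(M m + S - T + sqrt ((M m - S + T)\<^sup>2 + 4 * T * (\<Sum>k<m. M k - M m))) / 2 = lam"
    unfolding lam_def q_def p_def D_def d_def by simp
  show ?thesis
    unfolding M_def[symmetric] S_def[symmetric] T_def[symmetric] m_def[symmetric] lam_eq2
    by (rule main)
qed

end
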